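(* Let $M$ be an $\widehat{\mathrm{FI}}$-module such that $\Sigma^NM$ has generation degree $\le d$. Then $M$ has generation degree $\le d+N$.
   Context: $\widehat{\mathrm S}_n=\{(\sigma,d)\in\mathrm S_n\times\mathbb Z: d\text{ odd}\iff\operatorname{sgn}\sigma=-1\}$ ($n\ge2$; trivial for $n=0,1$). $\widehat{\mathrm{FI}}$: objects $n\in\mathbb N$, $\widehat{\mathrm{FI}}(n,m)=\widehat{\mathrm S}_m/i_2(\widehat{\mathrm S}_{m-n})$ ($i_1,i_2$ inclusions on first/last letters), composition $([s],[t])\mapsto[t\,i_1(s)]$, with monoidal structure $n\oplus m=n+m$ defined on morphisms via $i_1,i_2$ and a braiding from $\mathrm{Br}_n\to\widehat{\mathrm S}_n$, $\sigma_{i,i+1}\mapsto((i\ i{+}1),1)$. $\Sigma M$ is the restriction of $M$ along $-\oplus 1$, $(\Sigma M)_n=M_{n+1}$. Generation degree $\le d$: $M$ is a quotient of $\mathbf I(W)$, $\mathbf I(W)_m=\bigoplus_{n\le m}\mathbb Z[\widehat{\mathrm{FI}}(n,m)]\otimes_{\mathbb Z\widehat{\mathrm S}_n}W_n$, with $W_n=0$ for $n>d$. *)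

theory Defs
  imports "HOL-Combinatorics.Permutations"
begin

text \<open>Elements of the groups hat S_n are pairs (sigma, d) with sigma a permutation
of the letters 0..n-1 (identity on all other naturals) and d an integer.\<close>

type_synonym hsel = "(nat \<Rightarrow> nat) \<times> int"

definition hS :: "nat \<Rightarrow> hsel set" where
  "hS n = {(\<sigma>, d). \<sigma> permutes {..<n} \<and>
            (if 2 \<le> n then (odd d \<longleftrightarrow> (sign \<sigma> :: int) = -1) else d = 0)}"

definition hmult :: "hsel \<Rightarrow> hsel \<Rightarrow> hsel" where
  "hmult s t = (fst s \<circ> fst t, snd s + snd t)"

text \<open>i_1 is the identity on representatives; i_2 n shifts a permutation of the
first k letters to the letters n..n+k-1.\<close>

definition hi2 :: "nat \<Rightarrow> hsel \<Rightarrow> hsel" where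
  "hi2 n t = ((\<lambda>x. if x < n then x else fst t (x - n) + n), snd t)"

text \<open>The morphism of hat FI(n,m) represented by s in hat S_m: the left coset
s * i_2(hat S_(m-n)).\<close>

definition hcoset :: "nat \<Rightarrow> nat \<Rightarrow> hsel \<Rightarrow> hsel set" where
  "hcoset n m s = (\<lambda>h. hmult s (hi2 n h)) ` hS (m - n)"

definition hFI :: "nat \<Rightarrow> nat \<Rightarrow> hsel set set" where
  "hFI n m = (if n \<le> m then hcoset n m ` hS m else {})"

definition hid :: "nat \<Rightarrow> hsel set" where
  "hid n = hcoset n n (id, 0)"

text \<open>Composition ([s],[t]) |-> [t i_1(s)] of [s] : n -> m and [t] : m -> k.\<close>

definition hcomp :: "nat \<Rightarrow> nat \<Rightarrow> hsel set \<Rightarrow> hsel set \<Rightarrow> hsel set" where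
  "hcomp n k g f = hcoset n k (hmult (SOME t. t \<in> g) (SOME s. s \<in> f))"

text \<open>An hat FI-module: abelian groups M_n (subgroups of an ambient abelian group)
with a functorial additive action.\<close>

definition is_hFI_module :: "(nat \<Rightarrow> 'a::ab_group_add set) \<Rightarrow>
    (nat \<Rightarrow> nat \<Rightarrow> hsel set \<Rightarrow> 'a \<Rightarrow> 'a) \<Rightarrow> bool" where
  "is_hFI_module M act \<longleftrightarrow>
     (\<forall>n. 0 \<in> M n \<and> (\<forall>x\<in>M n. \<forall>y\<in>M n. x + y \<in> M n) \<and> (\<forall>x\<in>M n. - x \<in> M n)) \<and>
     (\<forall>n m f. f \<in> hFI n m \<longrightarrow>
        (\<forall>x\<in>M n. act n m f x \<in> M m) \<and>
        (\<forall>x\<in>M n. \<forall>y\<in>M n. act n m f (x + y) = act n m f x + act n m f y)) \<and>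
     (\<forall>n. \<forall>x\<in>M n. act n n (hid n) x = x) \<and>
     (\<forall>n m k f g. f \<in> hFI n m \<longrightarrow> g \<in> hFI m k \<longrightarrow>
        (\<forall>x\<in>M n. act n k (hcomp n k g f) x = act m k g (act n m f x)))"

text \<open>f (+) id_1 for f : n -> m: the injection sending n to m, using the lift of
the cycle given by the (positive) braiding, i.e. with integer part m - n.\<close>

definition hcyc :: "nat \<Rightarrow> nat \<Rightarrow> hsel" where
  "hcyc n m = ((\<lambda>x. if x = n then m else if n < x \<and> x \<le> m then x - 1 else x), int (m - n))"

definition hplus1 :: "nat \<Rightarrow> nat \<Rightarrow> hsel set \<Rightarrow> hsel set" where
  "hplus1 n m f = hcoset (Suc n) (Suc m) (hmult (SOME s. s \<in> f) (hcyc n m))"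

definition hSigma :: "(nat \<Rightarrow> 'a set) \<times> (nat \<Rightarrow> nat \<Rightarrow> hsel set \<Rightarrow> 'a \<Rightarrow> 'a) \<Rightarrow>
    (nat \<Rightarrow> 'a set) \<times> (nat \<Rightarrow> nat \<Rightarrow> hsel set \<Rightarrow> 'a \<Rightarrow> 'a)" where
  "hSigma Ma = (\<lambda>n. fst Ma (Suc n), \<lambda>n m f. snd Ma (Suc n) (Suc m) (hplus1 n m f))"

inductive_set agen :: "'a::ab_group_add set \<Rightarrow> 'a set" for S where
  agen_zero: "0 \<in> agen S"
| agen_base: "x \<in> S \<Longrightarrow> x \<in> agen S"
| agen_add: "x \<in> agen S \<Longrightarrow> y \<in> agen S \<Longrightarrow> x + y \<in> agen S"
| agen_neg: "x \<in> agen S \<Longrightarrow> - x \<in> agen S"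

text \<open>Generation degree \<le> d: every M_m is generated by images of elements of
degrees \<le> d (equivalently, M is a quotient of some I(W) with W_n = 0 for n > d).\<close>

definition gen_deg_le :: "(nat \<Rightarrow> 'a::ab_group_add set) \<Rightarrow>
    (nat \<Rightarrow> nat \<Rightarrow> hsel set \<Rightarrow> 'a \<Rightarrow> 'a) \<Rightarrow> nat \<Rightarrow> bool" where
  "gen_deg_le M act d \<longleftrightarrow>
     (\<forall>m. M m \<subseteq> agen {act n m f x | n f x. n \<le> d \<and> f \<in> hFI n m \<and> x \<in> M n})"

end

theory Submission imports Defs begin

definition sh :: "nat \<Rightarrow> (nat \<Rightarrow> nat) \<Rightarrow> nat \<Rightarrow> nat" where
  "sh n p = (\<lambda>x. if x < n then x else p (x - n) + n)"

lemma sh_id: "sh n id = id"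
  by (auto simp: sh_def)

lemma sh_swap: "sh n (transpose a b \<circ> p) = transpose (a+n) (b+n) \<circ> sh n p"
  by (auto simp: sh_def transpose_def fun_eq_iff)

lemma sh_props: assumes "p permutes {..<k}" shows "sh n p permutes {..<n+k} \<and> sign (sh n p) = (sign p :: int)"
  using assms finite_lessThan[of k]
proof (induction rule: permutes_induct)
  case id
  have "sh n (\<lambda>a. a) = id" by (auto simp: sh_def)
  then show ?case by (simp add: sh_id id_def[symmetric])
next
  case (swap a b p)
  have pp: "permutation (sh n p)" using swap.IH permutes_imp_permutation by blast
  have pq: "permutation p" using swap.hyps permutes_imp_permutation by blast
  have t: "transpose (a+n) (b+n) permutes {..<n+k}" using swap.hyps by (intro permutes_swap_id) auto
  have "sign (transpose (a+n) (b+n) \<circ> sh n p) = (sign (transpose (a+n) (b+n)) * sign (sh n p) :: int)"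
    by (rule sign_compose[OF permutation_swap_id pp])
  moreover have "sign (transpose a b \<circ> p) = (sign (transpose a b) * sign p :: int)"
    by (rule sign_compose[OF permutation_swap_id pq])
  moreover have "transpose (a+n) (b+n) \<circ> sh n p permutes {..<n+k}"
    using permutes_compose[OF _ t] swap.IH by blast
  ultimately show ?case using swap.IH swap.hyps
    by (simp only: sh_swap sign_swap_id) simp
qed

definition cyc :: "nat \<Rightarrow> nat \<Rightarrow> nat \<Rightarrow> nat" where
  "cyc n m = (\<lambda>x. if x = n then m else if n < x \<and> x \<le> m then x - 1 else x)"

lemma cyc_props_aux: "cyc n (n+k) permutes {..<Suc (n+k)} \<and> sign (cyc n (n+k)) = ((-1) ^ k :: int)"
proof (induction k)
  case 0
  have "cyc n n = id" by (auto simp: cyc_def)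
  then show ?case by (simp add: id_def[symmetric])
next
  case (Suc k)
  define m where "m = n + k"
  have e: "cyc n (Suc m) = transpose m (Suc m) \<circ> cyc n m"
    by (auto simp: cyc_def transpose_def fun_eq_iff m_def)
  have p1: "cyc n m permutes {..<Suc (Suc m)}" using Suc.IH unfolding m_def
    by (meson permutes_subset lessThan_subset_iff le_SucI order_refl)
  have p2: "transpose m (Suc m) permutes {..<Suc (Suc m)}" by (intro permutes_swap_id) auto
  have pc: "permutation (cyc n m)" using Suc.IH permutes_imp_permutation m_def by blast
  have "sign (transpose m (Suc m) \<circ> cyc n m) = (sign (transpose m (Suc m)) * sign (cyc n m) :: int)"
    by (rule sign_compose[OF permutation_swap_id pc])
  moreover have "transpose m (Suc m) \<circ> cyc n m permutes {..<Suc (Suc m)}"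
    using permutes_compose[OF p1 p2] .
  ultimately show ?case using Suc.IH unfolding m_def[symmetric]
    by (simp only: add_Suc_right e sign_swap_id m_def[symmetric]) simp
qed

lemma cyc_props: "n \<le> m \<Longrightarrow> cyc n m permutes {..<Suc m} \<and> sign (cyc n m) = ((-1) ^ (m - n) :: int)"
  using cyc_props_aux[of n "m - n"] by simp

lemma sign_cases: "sign p = (1::int) \<or> sign p = -1"
  by (simp add: sign_def)

lemma hS_mem: "(a, b) \<in> hS n \<longleftrightarrow> a permutes {..<n} \<and>
   (if 2 \<le> n then (odd b \<longleftrightarrow> (sign a :: int) = -1) else b = 0)"
  by (simp add: hS_def)

lemma small_perm: assumes "a permutes {..<(n::nat)}" "n < 2" shows "a = id"
proof -
  have "n = 0 \<or> n = 1" using assms(2) by auto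
  then show ?thesis using assms(1) by (auto simp: lessThan_Suc)
qed

lemma hS_parity: assumes "(a, b) \<in> hS n" "1 \<le> n" shows "odd b \<longleftrightarrow> (sign a :: int) = -1"
proof (cases "2 \<le> n")
  case True then show ?thesis using assms by (simp add: hS_mem)
next
  case False
  then have "a = id" "b = 0" using assms small_perm[of a n] by (auto simp: hS_mem)
  then show ?thesis by simp
qed

lemma hS_id: "(id, 0) \<in> hS n"
  by (simp add: hS_mem)

lemma hS_mult_hi2:
  assumes s0: "s0 \<in> hS m" and h: "h \<in> hS (m - n)" and nm: "n \<le> m"
  shows "hmult s0 (hi2 n h) \<in> hS m"
proof -
  obtain a b where ab: "s0 = (a, b)" by (cases s0)
  obtain c e where ce: "h = (c, e)" by (cases h)
  have hi: "hi2 n h = (sh n c, e)" unfolding ce hi2_def sh_def by (simp only: fst_conv snd_conv)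
  have ap: "a permutes {..<m}" using s0 ab by (simp add: hS_mem)
  have cp: "c permutes {..<m-n}" using h ce by (simp add: hS_mem)
  from sh_props[OF cp, of n] nm have shp: "sh n c permutes {..<m}" and shs: "sign (sh n c) = (sign c :: int)"
    by auto
  show ?thesis
  proof (cases "2 \<le> m - n")
    case True
    have pa: "odd b \<longleftrightarrow> (sign a :: int) = -1" using s0 ab True by (simp add: hS_mem)
    have pc: "odd e \<longleftrightarrow> (sign c :: int) = -1" using h ce True by (simp add: hS_mem)
    have sg: "sign (a \<circ> sh n c) = (sign a * sign c :: int)"
      using sign_compose[OF permutes_imp_permutation[OF _ ap] permutes_imp_permutation[OF _ shp]] shs by simp
    have "odd (b + e) \<longleftrightarrow> (sign a * sign c :: int) = -1"
      using pa pc sign_cases[of a] sign_cases[of c] by auto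
    moreover have "2 \<le> m" using True by arith
    ultimately show ?thesis using True sg permutes_compose[OF shp ap]
      by (simp add: hS_mem hmult_def ab hi)
  next
    case False
    have "c = id" using small_perm[OF cp] False by simp
    moreover have "e = 0" using h ce False by (simp add: hS_mem)
    ultimately have "hmult s0 (hi2 n h) = s0" by (simp add: hmult_def ab hi sh_id)
    then show ?thesis using s0 by simp
  qed
qed

lemma hS_mult_cyc:
  assumes s: "s \<in> hS m" and nm: "n \<le> m"
  shows "hmult s (hcyc n m) \<in> hS (Suc m)"
proof -
  obtain a b where ab: "s = (a, b)" by (cases s)
  have ap: "a permutes {..<m}" using s ab by (simp add: hS_mem)
  have ap': "a permutes {..<Suc m}" using ap by (rule permutes_subset) auto
  have cp: "cyc n m permutes {..<Suc m}" and cs: "sign (cyc n m) = ((-1) ^ (m - n) :: int)"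
    using cyc_props[OF nm] by auto
  have hc: "hcyc n m = (cyc n m, int (m - n))" by (simp add: hcyc_def cyc_def)
  have perm: "a \<circ> cyc n m permutes {..<Suc m}" using permutes_compose[OF cp ap'] .
  show ?thesis
  proof (cases "m = 0")
    case True
    then have "a = id" "b = 0" using ap s ab by (auto simp: hS_mem)
    moreover have "hcyc n m = (id, 0)" using True nm by (auto simp: hcyc_def)
    ultimately show ?thesis using True by (simp add: hS_mem hmult_def ab)
  next
    case False
    have pa: "odd b \<longleftrightarrow> (sign a :: int) = -1" using hS_parity[of a b m] s ab False by simp
    have sg: "sign (a \<circ> cyc n m) = (sign a * (-1) ^ (m - n) :: int)"
      using sign_compose[OF permutes_imp_permutation[OF _ ap] permutes_imp_permutation[OF _ cp]] cs by simp
    have "odd (b + int (m - n)) \<longleftrightarrow> (sign a * (-1) ^ (m - n) :: int) = -1"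
      using pa sign_cases[of a] by (cases "even (m - n)") auto
    then show ?thesis using False sg perm by (simp add: hS_mem hmult_def hc ab)
  qed
qed

lemma hplus1_hFI:
  assumes f: "f \<in> hFI n m"
  shows "hplus1 n m f \<in> hFI (Suc n) (Suc m)"
proof -
  have nm: "n \<le> m" using f by (simp add: hFI_def split: if_splits)
  then obtain s0 where s0: "s0 \<in> hS m" and fe: "f = hcoset n m s0" using f by (auto simp: hFI_def)
  have "hmult s0 (hi2 n (id, 0)) \<in> f" using hS_id fe by (auto simp: hcoset_def)
  then have "(SOME s. s \<in> f) \<in> f" by (rule someI)
  then obtain h where h: "h \<in> hS (m - n)" and se: "(SOME s. s \<in> f) = hmult s0 (hi2 n h)"
    using fe by (auto simp: hcoset_def)
  have "(SOME s. s \<in> f) \<in> hS m" using se hS_mult_hi2[OF s0 h nm] by simp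
  then have "hmult (SOME s. s \<in> f) (hcyc n m) \<in> hS (Suc m)" using hS_mult_cyc nm by blast
  then show ?thesis using nm by (simp add: hplus1_def hFI_def)
qed

lemma iter_Sigma:
  assumes "is_hFI_module M act"
  shows "fst ((hSigma ^^ N) (M, act)) = (\<lambda>n. M (n + N)) \<and>
    (\<forall>n m f x. f \<in> hFI n m \<longrightarrow> (\<exists>g \<in> hFI (n + N) (m + N).
       snd ((hSigma ^^ N) (M, act)) n m f x = act (n + N) (m + N) g x))"
proof (induction N)
  case 0
  then show ?case by auto
next
  case (Suc N)
  have fs: "fst ((hSigma ^^ Suc N) (M, act)) = (\<lambda>n. fst ((hSigma ^^ N) (M, act)) (Suc n))"
    by (simp add: hSigma_def)
  have sn: "snd ((hSigma ^^ Suc N) (M, act)) = (\<lambda>n m f. snd ((hSigma ^^ N) (M, act)) (Suc n) (Suc m) (hplus1 n m f))"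
    by (simp add: hSigma_def)
  show ?case
  proof
    show "fst ((hSigma ^^ Suc N) (M, act)) = (\<lambda>n. M (n + Suc N))" using fs Suc.IH by simp
    show "\<forall>n m f x. f \<in> hFI n m \<longrightarrow> (\<exists>g \<in> hFI (n + Suc N) (m + Suc N).
       snd ((hSigma ^^ Suc N) (M, act)) n m f x = act (n + Suc N) (m + Suc N) g x)"
    proof (intro allI impI)
      fix n m f x assume f: "f \<in> hFI n m"
      from Suc.IH hplus1_hFI[OF f] obtain g where "g \<in> hFI (Suc n + N) (Suc m + N)"
        "snd ((hSigma ^^ N) (M, act)) (Suc n) (Suc m) (hplus1 n m f) x = act (Suc n + N) (Suc m + N) g x"
        by blast
      then show "\<exists>g \<in> hFI (n + Suc N) (m + Suc N).
       snd ((hSigma ^^ Suc N) (M, act)) n m f x = act (n + Suc N) (m + Suc N) g x"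
        using sn by auto
    qed
  qed
qed

lemma agen_mono: assumes "S \<subseteq> T" shows "agen S \<subseteq> agen T"
proof
  fix x assume "x \<in> agen S"
  then show "x \<in> agen T"
    by induction (use assms in \<open>auto intro: agen.intros\<close>)
qed

theorem mainTheorem13:
  fixes M :: "nat \<Rightarrow> 'a::ab_group_add set"
    and act :: "nat \<Rightarrow> nat \<Rightarrow> hsel set \<Rightarrow> 'a \<Rightarrow> 'a"
    and N d :: nat
  assumes "is_hFI_module M act"
    and "gen_deg_le (fst ((hSigma ^^ N) (M, act))) (snd ((hSigma ^^ N) (M, act))) d"
  shows "gen_deg_le M act (d + N)"
proof -
  let ?X = "(hSigma ^^ N) (M, act)"
  have IJ: "fst ?X = (\<lambda>n. M (n + N)) \<and>
    (\<forall>n m f x. f \<in> hFI n m \<longrightarrow> (\<exists>g \<in> hFI (n + N) (m + N).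
       snd ?X n m f x = act (n + N) (m + N) g x))"
    by (rule iter_Sigma[OF assms(1)])
  have I: "fst ?X = (\<lambda>n. M (n + N))" using IJ by (rule conjunct1)
  have J: "\<And>n m f x. f \<in> hFI n m \<Longrightarrow> (\<exists>g \<in> hFI (n + N) (m + N).
       snd ?X n m f x = act (n + N) (m + N) g x)"
    using conjunct2[OF IJ] by simp
  have idm: "\<And>n x. x \<in> M n \<Longrightarrow> act n n (hid n) x = x" using assms(1) by (simp add: is_hFI_module_def)
  show ?thesis unfolding gen_deg_le_def
  proof
    fix m
    let ?G = "{act n m f x | n f x. n \<le> d + N \<and> f \<in> hFI n m \<and> x \<in> M n}"
    show "M m \<subseteq> agen ?G"
    proof (cases "m \<le> d + N")
      case True
      have "hid m \<in> hFI m m" using hS_id by (simp add: hFI_def hid_def)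
      show ?thesis
      proof
        fix x assume x: "x \<in> M m"
        have "act m m (hid m) x \<in> ?G" unfolding mem_Collect_eq
          by (intro exI[where x=m] exI[where x="hid m"] exI[where x=x]) (use True x \<open>hid m \<in> hFI m m\<close> in simp)
        then have "act m m (hid m) x \<in> agen ?G" by (rule agen_base)
        then show "x \<in> agen ?G" by (simp only: idm[OF x])
      qed
    next
      case False
      define k where "k = m - N"
      have mk: "m = k + N" using False k_def by simp
      have "fst ?X k \<subseteq> agen {snd ?X n k f x | n f x. n \<le> d \<and> f \<in> hFI n k \<and> x \<in> fst ?X n}"
        using assms(2) unfolding gen_deg_le_def by (rule spec)
      moreover have "{snd ?X n k f x | n f x. n \<le> d \<and> f \<in> hFI n k \<and> x \<in> fst ?X n} \<subseteq> ?G"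
      proof
        fix y assume "y \<in> {snd ?X n k f x | n f x. n \<le> d \<and> f \<in> hFI n k \<and> x \<in> fst ?X n}"
        then obtain n f x where y: "y = snd ?X n k f x" "n \<le> d" "f \<in> hFI n k" "x \<in> M (n + N)"
          using I by auto
        obtain g where "g \<in> hFI (n + N) (k + N)" "snd ?X n k f x = act (n + N) (k + N) g x"
          using J[OF y(3)] by blast
        moreover have "n + N \<le> d + N" using y(2) by simp
        ultimately show "y \<in> ?G" unfolding mem_Collect_eq
          by (intro exI[where x="n + N"] exI[where x=g] exI[where x=x]) (use y mk in simp)
      qed
      moreover have "M m = fst ?X k" using I mk by simp
      ultimately show ?thesis using agen_mono by (metis (no_types, lifting) subset_trans)
    qed
  qed
qed

end
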